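(* Let $G$ be a connected bipartite graph with at least $3$ vertices. Then \[ \mathcal{H}_G=[1,\infty),\qquad [2,\infty)\subset\mathcal{H}^\phi_G\subset[1,\infty),\qquad \{1\}\cup[3,\infty)\subset\mathcal{H}^\psi_G\subset[1,\infty). \] If moreover $K_{2,2}\subset G\subset K_{2,m}$ for some $m\ge2$, then $\mathcal{H}^\phi_G=[2,\infty)$ and $\{1\}\cup[2,\infty)\subset\mathcal{H}^\psi_G\subset[1,\infty)$.
   Context: Graphs are finite and simple; $K_{a,b}$ is the complete bipartite graph, and $\subset$ between graphs means subgraph containment (up to isomorphism). For a graph $G$ on $\{1,\dots,n\}$ and $I\subset\mathbb{R}$, $\mathcal{P}_G(I)$ is the set of real symmetric PSD $n\times n$ matrices with entries in $I$ and $a_{ij}=0$ whenever $i\ne j$ and $(i,j)$ is not an edge; $\mathcal{P}_G=\mathcal{P}_G(\mathbb{R})$. $A^{\circ\alpha}=(a_{ij}^\alpha)$ with $0^\alpha:=0$; $\psi_\alpha(x)=\mathrm{sgn}(x)|x|^\alpha$, $\phi_\alpha(x)=|x|^\alpha$ ($x\ne0$), $\psi_\alpha(0)=\phi_\alpha(0)=0$, applied entrywise. $\mathcal{H}_G=\{\alpha\in\mathbb{R}:A^{\circ\alpha}\in\mathcal{P}_G\ \forall A\in\mathcal{P}_G([0,\infty))\}$, $\mathcal{H}_G^\psi=\{\alpha:\psi_\alpha[A]\in\mathcal{P}_G\ \forall A\in\mathcal{P}_G(\mathbb{R})\}$, $\mathcal{H}_G^\phi=\{\alpha:\phi_\alpha[A]\in\mathcal{P}_G\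 \forall A\in\mathcal{P}_G(\mathbb{R})\}$. *)

theory Defs
  imports Complex_Main
begin

text \<open>A finite simple graph on the vertex set {0..<n} (the paper uses {1..n}),
  given by its number of vertices and a symmetric irreflexive edge relation.\<close>
type_synonym graph = "nat \<times> (nat \<Rightarrow> nat \<Rightarrow> bool)"

definition nverts :: "graph \<Rightarrow> nat" where "nverts G = fst G"
definition adj :: "graph \<Rightarrow> nat \<Rightarrow> nat \<Rightarrow> bool" where "adj G = snd G"

definition simple_graph :: "graph \<Rightarrow> bool" where
  "simple_graph G \<longleftrightarrow> (\<forall>i j. adj G i j \<longrightarrow> i < nverts G \<and> j < nverts G \<and> i \<noteq> j \<and> adj G j i)"

definition connected_graph :: "graph \<Rightarrow> bool" where
  "connected_graph G \<longleftrightarrow> (\<forall>i j. i < nverts G \<and> j < nverts G \<longrightarrow> (adj G)\<^sup>*\<^sup>* i j)"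

definition bipartite_graph :: "graph \<Rightarrow> bool" where
  "bipartite_graph G \<longleftrightarrow> (\<exists>c :: nat \<Rightarrow> bool. \<forall>i j. adj G i j \<longrightarrow> c i \<noteq> c j)"

definition K_bip :: "nat \<Rightarrow> nat \<Rightarrow> graph" where
  "K_bip a b = (a + b, \<lambda>i j. i < a + b \<and> j < a + b \<and> ((i < a \<and> a \<le> j) \<or> (j < a \<and> a \<le> i)))"

definition subgraph_of :: "graph \<Rightarrow> graph \<Rightarrow> bool" where
  "subgraph_of H G \<longleftrightarrow> (\<exists>f. inj_on f {..<nverts H} \<and> f ` {..<nverts H} \<subseteq> {..<nverts G} \<and>
      (\<forall>i j. adj H i j \<longrightarrow> adj G (f i) (f j)))"

definition psd :: "nat \<Rightarrow> (nat \<Rightarrow> nat \<Rightarrow> real) \<Rightarrow> bool" where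
  "psd n A \<longleftrightarrow> (\<forall>i<n. \<forall>j<n. A i j = A j i) \<and>
     (\<forall>x :: nat \<Rightarrow> real. (\<Sum>i<n. \<Sum>j<n. x i * A i j * x j) \<ge> 0)"

definition PG :: "graph \<Rightarrow> real set \<Rightarrow> (nat \<Rightarrow> nat \<Rightarrow> real) set" where
  "PG G I = {A. psd (nverts G) A \<and> (\<forall>i<nverts G. \<forall>j<nverts G. A i j \<in> I) \<and>
      (\<forall>i<nverts G. \<forall>j<nverts G. i \<noteq> j \<and> \<not> adj G i j \<longrightarrow> A i j = 0)}"

definition psi_pow :: "real \<Rightarrow> real \<Rightarrow> real" where
  "psi_pow \<alpha> x = sgn x * \<bar>x\<bar> powr \<alpha>"

definition phi_pow :: "real \<Rightarrow> real \<Rightarrow> real" where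
  "phi_pow \<alpha> x = \<bar>x\<bar> powr \<alpha>"

text \<open>Note: 0 powr a = 0, matching the convention 0^alpha := 0.\<close>
definition HG :: "graph \<Rightarrow> real set" where
  "HG G = {\<alpha>. \<forall>A \<in> PG G {0..}. (\<lambda>i j. A i j powr \<alpha>) \<in> PG G UNIV}"

definition HG_psi :: "graph \<Rightarrow> real set" where
  "HG_psi G = {\<alpha>. \<forall>A \<in> PG G UNIV. (\<lambda>i j. psi_pow \<alpha> (A i j)) \<in> PG G UNIV}"

definition HG_phi :: "graph \<Rightarrow> real set" where
  "HG_phi G = {\<alpha>. \<forall>A \<in> PG G UNIV. (\<lambda>i j. phi_pow \<alpha> (A i j)) \<in> PG G UNIV}"

end

theory Submission
  imports Defs
begin



definition Qf :: "nat \<Rightarrow> (nat\<Rightarrow>nat\<Rightarrow>real) \<Rightarrow> (nat\<Rightarrow>real) \<Rightarrow> real" where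
  "Qf n A x = (\<Sum>i<n. \<Sum>j<n. x i * A i j * x j)"

lemma psd_Qf: "psd n A \<longleftrightarrow> (\<forall>i<n. \<forall>j<n. A i j = A j i) \<and> (\<forall>x. Qf n A x \<ge> 0)"
  unfolding psd_def Qf_def by simp

lemma Qf_support:
  assumes S: "S \<subseteq> {..<n}"
    and z: "\<And>i j. i<n \<Longrightarrow> j<n \<Longrightarrow> i \<notin> S \<or> j \<notin> S \<Longrightarrow> x i * A i j * x j = 0"
  shows "Qf n A x = (\<Sum>i\<in>S. \<Sum>j\<in>S. x i * A i j * x j)"
proof -
  have fS: "finite S" using S finite_subset by blast
  have "Qf n A x = (\<Sum>i\<in>S. \<Sum>j<n. x i * A i j * x j)"
    unfolding Qf_def
    by (rule sum.mono_neutral_right) (use S z in \<open>auto intro!: sum.neutral\<close>)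
  also have "\<dots> = (\<Sum>i\<in>S. \<Sum>j\<in>S. x i * A i j * x j)"
    by (rule sum.cong[OF refl], rule sum.mono_neutral_right) (use S z in auto)
  finally show ?thesis .
qed

lemma quad2_le:
  fixes p q r :: real
  assumes h: "\<And>a b. 0 \<le> a*a*p + 2*a*b*r + b*b*q"
  shows "r^2 \<le> p*q"
proof -
  have p: "p \<ge> 0" using h[of 1 0] by simp
  show ?thesis
  proof (cases "q > 0")
    case True
    have "0 \<le> q*q*p + 2*q*(-r)*r + (-r)*(-r)*q" by (rule h)
    hence "0 \<le> q * (p*q - r^2)" by (simp add: algebra_simps power2_eq_square)
    thus ?thesis using True by (simp add: zero_le_mult_iff)
  next
    case False
    have q: "q = 0" using h[of 0 1] False by simp
    show ?thesis
    proof (cases "r = 0")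
      case True thus ?thesis using p q by simp
    next
      case False
      have "0 \<le> 1*1*p + 2*1*(-(p+1)/(2*r))*r + (-(p+1)/(2*r))*(-(p+1)/(2*r))*q" by (rule h)
      hence "0 \<le> p - (p+1)" using False q by (simp add: field_simps)
      thus ?thesis by simp
    qed
  qed
qed

lemma psd_diag: assumes "psd n A" "i < n" shows "A i i \<ge> 0"
proof -
  have "Qf n A (\<lambda>k. if k = i then 1 else 0) \<ge> 0" using assms psd_Qf by blast
  also have "Qf n A (\<lambda>k. if k = i then 1 else 0) = A i i"
    by (subst Qf_support[of "{i}"]) (use assms in auto)
  finally show ?thesis .
qed

lemma psd_minor: assumes "psd n A" "i < n" "j < n" "i \<noteq> j"
  shows "(A i j)^2 \<le> A i i * A j j"
proof (rule quad2_le)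
  fix a b :: real
  have sy: "A j i = A i j" using assms unfolding psd_def by auto
  have "Qf n A (\<lambda>k. if k = i then a else if k = j then b else 0) \<ge> 0" using assms psd_Qf by blast
  also have "Qf n A (\<lambda>k. if k = i then a else if k = j then b else 0) = a*a*A i i + 2*a*b*A i j + b*b*A j j"
    by (subst Qf_support[of "{i,j}"]) (use assms sy in \<open>auto simp: algebra_simps\<close>)
  finally show "0 \<le> a*a*A i i + 2*a*b*A i j + b*b*A j j" .
qed




lemma amgm2: fixes r r' x y :: real assumes "r > 0" "r * r' = 1"
  shows "2*\<bar>x*y\<bar> \<le> r*x^2 + r'*y^2"
proof -
  have r': "r' = 1/r" using assms by (simp add: field_simps)
  have "0 \<le> (r*\<bar>x\<bar> - \<bar>y\<bar>)^2" by simp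
  hence "2*r*\<bar>x*y\<bar> \<le> r*(r*x^2) + y^2" by (simp add: power2_eq_square algebra_simps abs_mult)
  hence "r*(2*\<bar>x*y\<bar>) \<le> r*(r*x^2 + r'*y^2)" using assms r' by (simp add: algebra_simps)
  thus ?thesis using assms by simp
qed

lemma lin_aux: "(G::real) \<le> Q \<Longrightarrow> S2 = S1 \<Longrightarrow> S1 \<le> D \<Longrightarrow> G = D - (S1+S2)/2 \<Longrightarrow> 0 \<le> (Q::real)"
  by simp

lemma psd_domin:
  fixes B :: "nat \<Rightarrow> nat \<Rightarrow> real" and r :: "nat \<Rightarrow> nat \<Rightarrow> real"
  assumes sym: "\<And>i j. i<n \<Longrightarrow> j<n \<Longrightarrow> B i j = B j i"
    and rpos: "\<And>i j. r i j > 0" and rinv: "\<And>i j. r i j * r j i = 1"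
    and row: "\<And>i. i<n \<Longrightarrow> (\<Sum>j<n. if j = i then 0 else \<bar>B i j\<bar> * r i j) \<le> B i i"
  shows "Qf n B x \<ge> 0"
proof -
  define h1 where "h1 i j = (if i = j then 0 else \<bar>B i j\<bar> * r i j * (x i)^2)" for i j
  define h2 where "h2 i j = (if i = j then 0 else \<bar>B i j\<bar> * r j i * (x j)^2)" for i j
  define g where "g i j = (if i = j then B i i * (x i)^2 else 0) - (h1 i j + h2 i j)/2" for i j
  have pt: "g i j \<le> x i * B i j * x j" for i j
  proof (cases "i = j")
    case True thus ?thesis by (simp add: g_def h1_def h2_def power2_eq_square)
  next
    case False
    have "2*\<bar>x i*x j\<bar> \<le> r i j*(x i)^2 + r j i*(x j)^2" by (rule amgm2[OF rpos rinv])
    hence "\<bar>B i j\<bar>*(2*\<bar>x i*x j\<bar>) \<le> \<bar>B i j\<bar>*(r i j*(x i)^2 + r j i*(x j)^2)"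
      by (rule mult_left_mono) simp
    moreover have "- (x i * B i j * x j) \<le> \<bar>B i j\<bar>*\<bar>x i*x j\<bar>"
      by (metis abs_ge_minus_self abs_mult mult.commute mult.left_commute)
    ultimately have "- ((\<bar>B i j\<bar>*(r i j*(x i)^2 + r j i*(x j)^2))/2) \<le> x i * B i j * x j"
      by linarith
    thus ?thesis using False unfolding g_def h1_def h2_def by (simp add: algebra_simps)
  qed
  have "(\<Sum>i<n. \<Sum>j<n. g i j) \<le> Qf n B x"
    unfolding Qf_def by (intro sum_mono pt)
  moreover have S2: "(\<Sum>i<n. \<Sum>j<n. h2 i j) = (\<Sum>i<n. \<Sum>j<n. h1 i j)"
  proof -
    have "(\<Sum>i<n. \<Sum>j<n. h2 i j) = (\<Sum>j<n. \<Sum>i<n. h2 i j)" by (rule sum.swap)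
    also have "\<dots> = (\<Sum>j<n. \<Sum>i<n. h1 j i)"
      by (intro sum.cong refl) (auto simp: h1_def h2_def sym)
    finally show ?thesis .
  qed
  moreover have S1: "(\<Sum>i<n. \<Sum>j<n. h1 i j) \<le> (\<Sum>i<n. B i i * (x i)^2)"
  proof (rule sum_mono)
    fix i assume i: "i \<in> {..<n}"
    have "(\<Sum>j<n. h1 i j) = (x i)^2 * (\<Sum>j<n. if j = i then 0 else \<bar>B i j\<bar> * r i j)"
      by (simp add: h1_def sum_distrib_left) (intro sum.cong refl, auto)
    also have "\<dots> \<le> (x i)^2 * B i i" using row i by (intro mult_left_mono) auto
    finally show "(\<Sum>j<n. h1 i j) \<le> B i i * (x i)^2" by (simp add: mult.commute)
  qed
  moreover have "(\<Sum>i<n. \<Sum>j<n. g i j) = (\<Sum>i<n. B i i * (x i)^2) - ((\<Sum>i<n. \<Sum>j<n. h1 i j) + (\<Sum>i<n. \<Sum>j<n. h2 i j))/2"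
    by (simp add: g_def sum_subtractf sum.distrib sum_divide_distrib[symmetric])
  ultimately show ?thesis by (rule lin_aux)
qed




lemma row_bound:
  fixes A :: "nat \<Rightarrow> nat \<Rightarrow> real" and E :: "nat \<Rightarrow> nat \<Rightarrow> bool"
  assumes psd: "psd n A"
    and pat: "\<And>i j. i<n \<Longrightarrow> j<n \<Longrightarrow> i \<noteq> j \<Longrightarrow> A i j \<noteq> 0 \<Longrightarrow> E i j"
    and notri: "\<And>i p q. \<not> (E i p \<and> E i q \<and> E p q)"
    and i: "i < n"
  shows "(\<Sum>j<n. if j = i then 0 else (A i j)^2 / A j j) \<le> A i i"
proof -
  have sy: "\<And>p q. p<n \<Longrightarrow> q<n \<Longrightarrow> A p q = A q p" using psd unfolding psd_def by auto
  define x where "x k = (if k = i then 1 else - (A i k / A k k))" for k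
  define k where "k p = (if p = i then 0 else (A i p)^2 / A p p)" for p
  have pt: "x p * A p q * x q = (if p = i \<and> q = i then A i i else 0) - (if p = i then k q else 0)
      - (if q = i then k p else 0) + (if p = q then k p else 0)" if p: "p<n" and q: "q<n" for p q
  proof -
    consider "p = i" "q = i" | "p = i" "q \<noteq> i" | "p \<noteq> i" "q = i" | "p \<noteq> i" "q \<noteq> i" "p = q"
      | "p \<noteq> i" "q \<noteq> i" "p \<noteq> q" by blast
    thus ?thesis
    proof cases
      case 1 thus ?thesis by (simp add: x_def k_def)
    next
      case 2 thus ?thesis by (simp add: x_def k_def power2_eq_square)
    next
      case 3 thus ?thesis using sy[OF p i] by (simp add: x_def k_def power2_eq_square)
    next
      case 4 thus ?thesis by (cases "A p p = 0") (simp_all add: x_def k_def power2_eq_square)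
    next
      case 5
      have "A i p = 0 \<or> A i q = 0 \<or> A p q = 0"
        using pat[OF i p] pat[OF i q] pat[OF p q] 5 notri by metis
      thus ?thesis using 5 by (auto simp: x_def k_def)
    qed
  qed
  have "0 \<le> Qf n A x" using psd psd_Qf by blast
  also have "Qf n A x = (\<Sum>p<n. \<Sum>q<n. (if p = i \<and> q = i then A i i else 0) - (if p = i then k q else 0)
      - (if q = i then k p else 0) + (if p = q then k p else 0))"
    unfolding Qf_def by (intro sum.cong refl pt) auto
  also have "\<dots> = (\<Sum>p<n. \<Sum>q<n. if p = i \<and> q = i then A i i else 0) - (\<Sum>p<n. \<Sum>q<n. if p = i then k q else 0)
      - (\<Sum>p<n. \<Sum>q<n. if q = i then k p else 0) + (\<Sum>p<n. \<Sum>q<n. if p = q then k p else 0)"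
    by (simp only: sum.distrib sum_subtractf)
  also have "(\<Sum>p<n. \<Sum>q<n. if p = i \<and> q = i then A i i else 0) = A i i"
  proof -
    have "(\<Sum>p<n. \<Sum>q<n. if p = i \<and> q = i then A i i else 0) = (\<Sum>p<n. if p = i then A i i else 0)"
      by (intro sum.cong refl) (use i in auto)
    thus ?thesis using i by simp
  qed
  also have "(\<Sum>p<n. \<Sum>q<n. if p = i then k q else 0) = (\<Sum>q<n. k q)"
  proof -
    have "(\<Sum>p<n. \<Sum>q<n. if p = i then k q else 0) = (\<Sum>p<n. if p = i then (\<Sum>q<n. k q) else 0)"
      by (intro sum.cong refl) auto
    thus ?thesis using i by simp
  qed
  also have "(\<Sum>p<n. \<Sum>q<n. if q = i then k p else 0) = (\<Sum>q<n. k q)"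
    using i by simp
  also have "(\<Sum>p<n. \<Sum>q<n. if p = q then k p else 0) = (\<Sum>q<n. k q)"
    by simp
  finally show ?thesis unfolding k_def by simp
qed




lemma term_ineq:
  fixes a p q \<alpha> :: real
  assumes a: "a > 0" and p: "p > 0" and q: "q > 0" and apq: "a^2 \<le> p*q" and al: "\<alpha> \<ge> 2"
  shows "a powr \<alpha> * (p/q) powr (\<alpha>/2) \<le> p powr (\<alpha>-1) * (a^2/q)"
proof -
  have l: "2*ln a \<le> ln p + ln q"
  proof -
    have "ln (a^2) \<le> ln (p*q)" using apq a p q by (subst ln_le_cancel_iff) auto
    thus ?thesis using a p q by (simp add: ln_mult ln_realpow)
  qed
  have L: "ln (a powr \<alpha> * (p/q) powr (\<alpha>/2)) = \<alpha> * ln a + (\<alpha>/2) * (ln p - ln q)"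
    using a p q by (simp add: ln_mult ln_powr ln_div)
  have R: "ln (p powr (\<alpha>-1) * (a^2/q)) = (\<alpha>-1) * ln p + 2 * ln a - ln q"
    using a p q by (simp add: ln_mult ln_powr ln_div ln_realpow)
  have "(\<alpha> - 2) * (ln p + ln q - 2*ln a) \<ge> 0" using al l by simp
  moreover have "((\<alpha>-1) * ln p + 2 * ln a - ln q) - (\<alpha> * ln a + (\<alpha>/2) * (ln p - ln q)) = (\<alpha> - 2) * (ln p + ln q - 2*ln a) / 2"
    by (simp add: field_simps)
  ultimately have "\<alpha> * ln a + (\<alpha>/2) * (ln p - ln q) \<le> (\<alpha>-1) * ln p + 2 * ln a - ln q"
    by linarith
  hence "ln (a powr \<alpha> * (p/q) powr (\<alpha>/2)) \<le> ln (p powr (\<alpha>-1) * (a^2/q))" unfolding L R .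
  thus ?thesis using a p q by (subst (asm) ln_le_cancel_iff) auto
qed

lemma powr_psd:
  fixes A B :: "nat \<Rightarrow> nat \<Rightarrow> real" and E :: "nat \<Rightarrow> nat \<Rightarrow> bool"
  assumes psd: "psd n A"
    and pat: "\<And>i j. i<n \<Longrightarrow> j<n \<Longrightarrow> i \<noteq> j \<Longrightarrow> A i j \<noteq> 0 \<Longrightarrow> E i j"
    and notri: "\<And>i p q. \<not> (E i p \<and> E i q \<and> E p q)"
    and al: "\<alpha> \<ge> 2"
    and Bsym: "\<And>i j. i<n \<Longrightarrow> j<n \<Longrightarrow> B i j = B j i"
    and Babs: "\<And>i j. i<n \<Longrightarrow> j<n \<Longrightarrow> \<bar>B i j\<bar> = \<bar>A i j\<bar> powr \<alpha>"
    and Bdiag: "\<And>i. i<n \<Longrightarrow> B i i = A i i powr \<alpha>"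
  shows "psd n B"
proof -
  define r where "r i j = (if A i i > 0 \<and> A j j > 0 then (A i i / A j j) powr (\<alpha>/2) else 1)" for i j
  have rpos: "r i j > 0" for i j by (simp add: r_def)
  have rinv: "r i j * r j i = 1" for i j
  proof (cases "A i i > 0 \<and> A j j > 0")
    case True
    hence "r i j * r j i = (A i i / A j j) powr (\<alpha>/2) * (A j j / A i i) powr (\<alpha>/2)"
      by (simp add: r_def)
    also have "\<dots> = ((A i i / A j j) * (A j j / A i i)) powr (\<alpha>/2)"
      using True by (subst powr_mult) auto
    also have "\<dots> = 1" using True by simp
    finally show ?thesis .
  qed (auto simp: r_def)
  have row: "(\<Sum>j<n. if j = i then 0 else \<bar>B i j\<bar> * r i j) \<le> B i i" if i: "i < n" for i
  proof -
    have di: "A i i \<ge> 0" using psd_diag[OF psd i] .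
    have "(\<Sum>j<n. if j = i then 0 else \<bar>B i j\<bar> * r i j)
        \<le> (\<Sum>j<n. A i i powr (\<alpha>-1) * (if j = i then 0 else (A i j)^2 / A j j))"
    proof (rule sum_mono)
      fix j assume j: "j \<in> {..<n}"
      show "(if j = i then 0 else \<bar>B i j\<bar> * r i j) \<le> A i i powr (\<alpha>-1) * (if j = i then 0 else (A i j)^2 / A j j)"
      proof (cases "j = i \<or> A i j = 0")
        case True thus ?thesis using Babs[OF i] j by auto
      next
        case False
        hence ji: "j \<noteq> i" and a0: "A i j \<noteq> 0" by auto
        have dj: "A j j \<ge> 0" using psd_diag[OF psd] j by auto
        have m: "(A i j)^2 \<le> A i i * A j j" using psd_minor[OF psd i _ ji[symmetric]] j by auto
        have "0 < (A i j)^2" using a0 by simp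
        hence pos: "A i i > 0 \<and> A j j > 0" using m di dj
          by (metis less_eq_real_def mult_eq_0_iff not_le)
        have "\<bar>A i j\<bar> powr \<alpha> * (A i i / A j j) powr (\<alpha>/2) \<le> A i i powr (\<alpha>-1) * (\<bar>A i j\<bar>^2 / A j j)"
          by (rule term_ineq) (use a0 pos m al in auto)
        thus ?thesis using ji pos Babs[OF i] j by (simp add: r_def)
      qed
    qed
    also have "\<dots> = A i i powr (\<alpha>-1) * (\<Sum>j<n. if j = i then 0 else (A i j)^2 / A j j)"
      by (simp add: sum_distrib_left)
    also have "\<dots> \<le> A i i powr (\<alpha>-1) * A i i"
      by (rule mult_left_mono[OF row_bound[OF psd pat notri i]]) auto
    also have "\<dots> = B i i"
    proof (cases "A i i = 0")
      case False
      hence "A i i powr (\<alpha>-1) * A i i = A i i powr (\<alpha>-1) * A i i powr 1" using di by simp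
      also have "\<dots> = A i i powr ((\<alpha>-1) + 1)" by (rule powr_add[symmetric])
      also have "\<dots> = A i i powr \<alpha>" by simp
      finally show ?thesis using Bdiag[OF i] by simp
    qed (simp add: Bdiag[OF i])
    finally show ?thesis .
  qed
  show ?thesis unfolding psd_Qf
    using psd_domin[of n B r, OF Bsym rpos rinv row] Bsym by blast
qed




lemma term_ineq2:
  fixes a p q \<alpha> :: real
  assumes a: "a > 0" and p: "p > 0" and q: "q > 0" and apq: "a^2 \<le> p*q" and al: "\<alpha> \<ge> 1"
  shows "a powr \<alpha> \<le> a * p powr ((\<alpha>-1)/2) * q powr ((\<alpha>-1)/2)"
proof -
  have l: "2*ln a \<le> ln p + ln q"
  proof -
    have "ln (a^2) \<le> ln (p*q)" using apq a p q by (subst ln_le_cancel_iff) auto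
    thus ?thesis using a p q by (simp add: ln_mult ln_realpow)
  qed
  have L: "ln (a powr \<alpha>) = \<alpha> * ln a" using a by (simp add: ln_powr)
  have R: "ln (a * p powr ((\<alpha>-1)/2) * q powr ((\<alpha>-1)/2)) = ln a + ((\<alpha>-1)/2) * ln p + ((\<alpha>-1)/2) * ln q"
    using a p q by (simp add: ln_mult ln_powr)
  have "(\<alpha> - 1) * (ln p + ln q - 2*ln a) \<ge> 0" using al l by simp
  moreover have "(ln a + ((\<alpha>-1)/2) * ln p + ((\<alpha>-1)/2) * ln q) - \<alpha> * ln a = (\<alpha> - 1) * (ln p + ln q - 2*ln a) / 2"
    by (simp add: field_simps)
  ultimately have "\<alpha> * ln a \<le> ln a + ((\<alpha>-1)/2) * ln p + ((\<alpha>-1)/2) * ln q"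
    by linarith
  hence "ln (a powr \<alpha>) \<le> ln (a * p powr ((\<alpha>-1)/2) * q powr ((\<alpha>-1)/2))" unfolding L R .
  thus ?thesis using a p q by (subst (asm) ln_le_cancel_iff) auto
qed

lemma hg_psd:
  fixes A :: "nat \<Rightarrow> nat \<Rightarrow> real" and c :: "nat \<Rightarrow> bool"
  assumes psd: "psd n A"
    and nn: "\<And>i j. i<n \<Longrightarrow> j<n \<Longrightarrow> A i j \<ge> 0"
    and pat: "\<And>i j. i<n \<Longrightarrow> j<n \<Longrightarrow> i \<noteq> j \<Longrightarrow> A i j \<noteq> 0 \<Longrightarrow> c i \<noteq> c j"
    and al: "\<alpha> \<ge> 1"
  shows "psd n (\<lambda>i j. A i j powr \<alpha>)"
proof -
  have sy: "\<And>i j. i<n \<Longrightarrow> j<n \<Longrightarrow> A i j = A j i" using psd unfolding psd_def by auto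
  have "Qf n (\<lambda>i j. A i j powr \<alpha>) x \<ge> 0" for x
  proof -
    define s where "s i = A i i powr ((\<alpha>-1)/2)" for i
    define e :: "nat \<Rightarrow> real" where "e i = (if c i then 1 else -1)" for i
    define w where "w i = s i * e i * \<bar>x i\<bar>" for i
    have s2: "s i * s i * A i i = A i i powr \<alpha>" if i: "i < n" for i
    proof (cases "A i i = 0")
      case False
      hence pos: "A i i > 0" using psd_diag[OF psd i] by simp
      have "A i i powr ((\<alpha>-1)/2 + (\<alpha>-1)/2 + 1) = s i * s i * A i i powr 1"
        unfolding s_def by (simp only: powr_add)
      also have "A i i powr 1 = A i i" using pos by simp
      also have "(\<alpha>-1)/2 + (\<alpha>-1)/2 + 1 = \<alpha>" by simp
      finally show ?thesis by simp
    qed (simp add: s_def)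
    have pt: "w i * A i j * w j \<le> x i * (A i j powr \<alpha>) * x j" if i: "i<n" and j: "j<n" for i j
    proof (cases "i = j")
      case True
      have ee: "e i * e i = 1" by (simp add: e_def)
      have "w i * A i j * w j = (s i * s i * A i i) * (e i * e i) * (\<bar>x i\<bar> * \<bar>x i\<bar>)" using True
        by (simp add: w_def algebra_simps)
      also have "\<dots> = A i i powr \<alpha> * (x i * x i)" unfolding s2[OF i] ee by simp
      finally show ?thesis using True by (simp add: algebra_simps)
    next
      case False
      show ?thesis
      proof (cases "A i j = 0")
        case True thus ?thesis by simp
      next
        case a0: False
        have ee: "e i * e j = -1" using pat[OF i j False a0] by (auto simp: e_def)
        have m: "(A i j)^2 \<le> A i i * A j j" using psd_minor[OF psd i j False] .
        have ap: "A i j > 0" using nn[OF i j] a0 by simp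
        have di: "A i i \<ge> 0" "A j j \<ge> 0" using psd_diag[OF psd] i j by auto
        have "0 < (A i j)^2" using a0 by simp
        hence pos: "A i i > 0 \<and> A j j > 0" using m di
          by (metis less_eq_real_def mult_eq_0_iff not_le)
        have t: "A i j powr \<alpha> \<le> A i j * s i * s j"
          unfolding s_def by (rule term_ineq2) (use ap pos m al in auto)
        have "w i * A i j * w j = (e i * e j) * (A i j * s i * s j) * \<bar>x i * x j\<bar>"
          by (simp add: w_def abs_mult algebra_simps)
        also have "\<dots> = - (A i j * s i * s j) * \<bar>x i * x j\<bar>" unfolding ee by simp
        also have "\<dots> \<le> - (A i j powr \<alpha>) * \<bar>x i * x j\<bar>"
          using t by (intro mult_right_mono) auto
        also have "\<dots> \<le> x i * (A i j powr \<alpha>) * x j"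
        proof -
          have "- (x i * x j) \<le> \<bar>x i * x j\<bar>" by simp
          hence "(A i j powr \<alpha>) * (- (x i * x j)) \<le> (A i j powr \<alpha>) * \<bar>x i * x j\<bar>"
            by (intro mult_left_mono) auto
          thus ?thesis by (simp add: algebra_simps)
        qed
        finally show ?thesis .
      qed
    qed
    have "0 \<le> Qf n A w" using psd psd_Qf by blast
    also have "\<dots> \<le> Qf n (\<lambda>i j. A i j powr \<alpha>) x" unfolding Qf_def
      by (intro sum_mono pt) auto
    finally show ?thesis .
  qed
  thus ?thesis unfolding psd_Qf using sy by simp
qed




lemma sqrt2_powr_lt: assumes "\<alpha> < \<beta>" shows "sqrt 2 powr \<alpha> < sqrt 2 powr \<beta>"
  by (rule powr_less_mono[OF assms]) simp

lemma ce1: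
  fixes E :: "nat \<Rightarrow> nat \<Rightarrow> bool"
  assumes d: "u \<noteq> v" "v \<noteq> w" "u \<noteq> w" and lt: "u < n" "v < n" "w < n"
    and e: "E u v" "E v u" "E v w" "E w v" and al: "\<alpha> < 1"
  shows "\<exists>A. psd n A \<and> (\<forall>i j. A i j \<ge> 0) \<and> (\<forall>i<n. \<forall>j<n. i \<noteq> j \<and> \<not> E i j \<longrightarrow> A i j = 0)
     \<and> \<not> psd n (\<lambda>i j. A i j powr \<alpha>)"
proof -
  define A where "A i j = (if i = j then (if i \<in> {u,v,w} then sqrt 2 else 0)
     else if {i,j} = {u,v} \<or> {i,j} = {v,w} then 1 else (0::real))" for i j
  have S: "{u,v,w} \<subseteq> {..<n}" using lt by auto
  have Q: "Qf n B x = (\<Sum>i\<in>{u,v,w}. \<Sum>j\<in>{u,v,w}. x i * B i j * x j)"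
    if "\<And>i j. i \<notin> {u,v,w} \<or> j \<notin> {u,v,w} \<Longrightarrow> B i j = 0" for B x
    by (rule Qf_support[OF S]) (use that in auto)
  have ent: "A u u = sqrt 2" "A v v = sqrt 2" "A w w = sqrt 2" "A u v = 1" "A v u = 1" "A v w = 1" "A w v = 1"
    "A u w = 0" "A w u = 0"
    using d by (auto simp: A_def doubleton_eq_iff)
  have zA: "A i j = 0" if h: "i \<notin> {u,v,w} \<or> j \<notin> {u,v,w}" for i j
  proof -
    have "{i,j} \<noteq> {u,v}" "{i,j} \<noteq> {v,w}" using h by blast+
    thus ?thesis using h unfolding A_def by auto
  qed
  have sum3: "(\<Sum>i\<in>{u,v,w}. f i) = f u + f v + f w" for f :: "nat \<Rightarrow> real"
    using d by (simp add: add.assoc)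
  have psdA: "psd n A"
    unfolding psd_Qf
  proof (intro conjI allI impI)
    fix i j assume "i < n" "j < n" show "A i j = A j i" unfolding A_def by (simp add: insert_commute)
  next
    fix x
    have "Qf n A x = sqrt 2 * ((x u)^2 + (x v)^2 + (x w)^2) + 2 * x u * x v + 2 * x v * x w"
    proof -
      have "Qf n A x = (\<Sum>i\<in>{u,v,w}. \<Sum>j\<in>{u,v,w}. x i * A i j * x j)"
        by (rule Q, rule zA, assumption)
      thus ?thesis unfolding sum3 ent by (simp add: algebra_simps power2_eq_square)
    qed
    moreover have "sqrt 2 * (sqrt 2 * ((x u)^2 + (x v)^2 + (x w)^2) + 2 * x u * x v + 2 * x v * x w)
       = (sqrt 2 * x v + x u + x w)^2 + (x u - x w)^2"
      by (simp add: algebra_simps power2_eq_square)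
    moreover have "0 \<le> (sqrt 2 * x v + x u + x w)^2 + (x u - x w)^2" by simp
    ultimately have "0 \<le> sqrt 2 * Qf n A x" by simp
    thus "0 \<le> Qf n A x" by (simp add: zero_le_mult_iff)
  qed
  have nn: "\<forall>i j. A i j \<ge> 0" by (auto simp: A_def)
  have pat: "\<forall>i<n. \<forall>j<n. i \<noteq> j \<and> \<not> E i j \<longrightarrow> A i j = 0" using e by (auto simp: A_def doubleton_eq_iff)
  define D where "D = sqrt 2 powr \<alpha>"
  have Dpos: "D > 0" by (simp add: D_def)
  have Dlt: "D < sqrt 2" using sqrt2_powr_lt[OF al] by (simp add: D_def)
  have "D * D < sqrt 2 * sqrt 2" using Dpos Dlt by (intro mult_strict_mono) auto
  hence DD: "D * D < 2" by simp
  define x where "x i = (if i = v then 2 else if i = u \<or> i = w then - D else 0)" for i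
  have "Qf n (\<lambda>i j. A i j powr \<alpha>) x = 2 * D * (D * D - 2)"
  proof (subst Q)
    fix i j assume "i \<notin> {u,v,w} \<or> j \<notin> {u,v,w}"
    thus "A i j powr \<alpha> = 0" using zA by simp
  next
    have xs: "x u = - D" "x v = 2" "x w = - D" using d by (auto simp: x_def)
    show "(\<Sum>i\<in>{u,v,w}. \<Sum>j\<in>{u,v,w}. x i * A i j powr \<alpha> * x j) = 2 * D * (D * D - 2)"
      unfolding sum3 ent xs by (simp add: D_def[symmetric] algebra_simps)
  qed
  also have "\<dots> < 0" using Dpos DD by (simp add: mult_pos_neg)
  finally have "\<not> psd n (\<lambda>i j. A i j powr \<alpha>)" unfolding psd_Qf using not_le by blast
  thus ?thesis using psdA nn pat by blast
qed




lemma ce2: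
  fixes E :: "nat \<Rightarrow> nat \<Rightarrow> bool"
  assumes d: "a \<noteq> b" "a \<noteq> c" "a \<noteq> d" "b \<noteq> c" "b \<noteq> d" "c \<noteq> d"
    and lt: "a < n" "b < n" "c < n" "d < n"
    and e: "E a c" "E c a" "E a d" "E d a" "E b c" "E c b" "E b d" "E d b" and al: "\<alpha> < 2"
  shows "\<exists>A. psd n A \<and> (\<forall>i<n. \<forall>j<n. i \<noteq> j \<and> \<not> E i j \<longrightarrow> A i j = 0)
     \<and> \<not> psd n (\<lambda>i j. phi_pow \<alpha> (A i j))"
proof -
  define A where "A i j = (if i = j then (if i \<in> {a,b,c,d} then sqrt 2 else 0)
     else if {i,j} = {a,c} \<or> {i,j} = {a,d} \<or> {i,j} = {b,c} then 1
     else if {i,j} = {b,d} then -1 else (0::real))" for i j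
  have S: "{a,b,c,d} \<subseteq> {..<n}" using lt by auto
  have Q: "Qf n B x = (\<Sum>i\<in>{a,b,c,d}. \<Sum>j\<in>{a,b,c,d}. x i * B i j * x j)"
    if "\<And>i j. i \<notin> {a,b,c,d} \<or> j \<notin> {a,b,c,d} \<Longrightarrow> B i j = 0" for B x
    by (rule Qf_support[OF S]) (use that in auto)
  have ent: "A a a = sqrt 2" "A b b = sqrt 2" "A c c = sqrt 2" "A d d = sqrt 2"
    "A a c = 1" "A c a = 1" "A a d = 1" "A d a = 1" "A b c = 1" "A c b = 1" "A b d = -1" "A d b = -1"
    "A a b = 0" "A b a = 0" "A c d = 0" "A d c = 0"
    using d by (auto simp: A_def doubleton_eq_iff)
  have zA: "A i j = 0" if h: "i \<notin> {a,b,c,d} \<or> j \<notin> {a,b,c,d}" for i j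
  proof -
    have "{i,j} \<noteq> {a,c}" "{i,j} \<noteq> {a,d}" "{i,j} \<noteq> {b,c}" "{i,j} \<noteq> {b,d}" using h by blast+
    thus ?thesis using h unfolding A_def by auto
  qed
  have sum4: "(\<Sum>i\<in>{a,b,c,d}. f i) = f a + f b + f c + f d" for f :: "nat \<Rightarrow> real"
    using d by (simp add: add.assoc)
  have psdA: "psd n A"
    unfolding psd_Qf
  proof (intro conjI allI impI)
    fix i j assume "i < n" "j < n" show "A i j = A j i" unfolding A_def by (simp add: insert_commute)
  next
    fix x
    have "Qf n A x = sqrt 2 * ((x a)^2 + (x b)^2 + (x c)^2 + (x d)^2) + 2 * x a * x c + 2 * x a * x d
        + 2 * x b * x c - 2 * x b * x d"
    proof -
      have "Qf n A x = (\<Sum>i\<in>{a,b,c,d}. \<Sum>j\<in>{a,b,c,d}. x i * A i j * x j)"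
        by (rule Q, rule zA, assumption)
      thus ?thesis unfolding sum4 ent by (simp add: algebra_simps power2_eq_square)
    qed
    moreover have "sqrt 2 * (sqrt 2 * ((x a)^2 + (x b)^2 + (x c)^2 + (x d)^2) + 2 * x a * x c + 2 * x a * x d
        + 2 * x b * x c - 2 * x b * x d)
       = (sqrt 2 * x a + x c + x d)^2 + (sqrt 2 * x b + x c - x d)^2"
      by (simp add: algebra_simps power2_eq_square)
    moreover have "0 \<le> (sqrt 2 * x a + x c + x d)^2 + (sqrt 2 * x b + x c - x d)^2" by simp
    ultimately have "0 \<le> sqrt 2 * Qf n A x" by simp
    thus "0 \<le> Qf n A x" by (simp add: zero_le_mult_iff)
  qed
  have pat: "\<forall>i<n. \<forall>j<n. i \<noteq> j \<and> \<not> E i j \<longrightarrow> A i j = 0" using e by (auto simp: A_def doubleton_eq_iff)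
  define D where "D = sqrt 2 powr \<alpha>"
  have Dlt: "D < 2"
  proof -
    have "D < sqrt 2 powr 2" using sqrt2_powr_lt[OF al] by (simp add: D_def)
    also have "sqrt 2 powr 2 = 2" by (simp add: powr_numeral)
    finally show ?thesis .
  qed
  define x where "x i = (if i = a \<or> i = b then 1 else if i = c \<or> i = d then -1 else (0::real))" for i
  have "Qf n (\<lambda>i j. phi_pow \<alpha> (A i j)) x = 4 * D - 8"
  proof -
    have "Qf n (\<lambda>i j. phi_pow \<alpha> (A i j)) x = (\<Sum>i\<in>{a,b,c,d}. \<Sum>j\<in>{a,b,c,d}. x i * phi_pow \<alpha> (A i j) * x j)"
      by (rule Q) (simp add: zA phi_pow_def)
    moreover have xs: "x a = 1" "x b = 1" "x c = -1" "x d = -1" using d by (auto simp: x_def)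
    ultimately show ?thesis unfolding sum4 ent xs by (simp add: phi_pow_def D_def[symmetric])
  qed
  also have "\<dots> < 0" using Dlt by simp
  finally have "\<not> psd n (\<lambda>i j. phi_pow \<alpha> (A i j))" unfolding psd_Qf using not_le by blast
  thus ?thesis using psdA pat by blast
qed




lemma reach_cherry:
  assumes r: "(adj G)\<^sup>*\<^sup>* a c" and ab: "adj G a b" and sg: "simple_graph G"
  shows "c = a \<or> c = b \<or> (\<exists>u v w. u \<noteq> w \<and> adj G v u \<and> adj G v w)"
  using r
proof (induction rule: rtranclp_induct)
  case base thus ?case by simp
next
  case (step y z)
  have ba: "adj G b a" using ab sg unfolding simple_graph_def by blast
  from step.IH show ?case
  proof (elim disjE)
    assume "y = a" thus ?thesis using step.hyps(2) ab by (cases "z = b") blast+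
  next
    assume "y = b" thus ?thesis using step.hyps(2) ba by (cases "z = a") blast+
  qed blast
qed

lemma cherry:
  assumes sg: "simple_graph G" and cg: "connected_graph G" and n3: "nverts G \<ge> 3"
  shows "\<exists>u v w. u \<noteq> w \<and> adj G v u \<and> adj G v w"
proof -
  have cc: "\<And>i j. i < nverts G \<Longrightarrow> j < nverts G \<Longrightarrow> (adj G)\<^sup>*\<^sup>* i j"
    using cg unfolding connected_graph_def by blast
  have "(adj G)\<^sup>*\<^sup>* 0 1" using cc n3 by simp
  hence "\<exists>b. adj G 0 b" by (metis converse_rtranclpE zero_neq_one)
  then obtain b where ab: "adj G 0 b" by blast
  define c :: nat where "c = (if b = 1 then 2 else 1)"
  have "c < nverts G" using n3 by (simp add: c_def)
  hence "(adj G)\<^sup>*\<^sup>* 0 c" using cc n3 by simp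
  from reach_cherry[OF this ab sg]
  have "c = 0 \<or> c = b \<or> (\<exists>u v w. u \<noteq> w \<and> adj G v u \<and> adj G v w)" .
  moreover have "c \<noteq> 0" "c \<noteq> b" by (auto simp: c_def)
  ultimately show ?thesis by simp
qed

lemma notri:
  assumes "bipartite_graph G" shows "\<not> (adj G i p \<and> adj G i q \<and> adj G p q)"
proof
  obtain c :: "nat \<Rightarrow> bool" where c: "\<And>i j. adj G i j \<Longrightarrow> c i \<noteq> c j"
    using assms unfolding bipartite_graph_def by blast
  assume "adj G i p \<and> adj G i q \<and> adj G p q"
  hence "c i \<noteq> c p" "c i \<noteq> c q" "c p \<noteq> c q" using c by blast+
  thus False by (cases "c i"; cases "c p"; cases "c q") auto
qed

lemma PG_pat: "A \<in> PG G I \<Longrightarrow> i < nverts G \<Longrightarrow> j < nverts G \<Longrightarrow> i \<noteq> j \<Longrightarrow> A i j \<noteq> 0 \<Longrightarrow> adj G i j"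
  unfolding PG_def by auto

lemma PG_psd: "A \<in> PG G I \<Longrightarrow> psd (nverts G) A"
  unfolding PG_def by auto

lemma PG_intro:
  assumes "psd (nverts G) B" "\<And>i j. A i j = 0 \<Longrightarrow> B i j = 0" "A \<in> PG G I"
  shows "B \<in> PG G UNIV"
  using assms unfolding PG_def by auto

lemma HG_ge1:
  assumes bg: "bipartite_graph G" and al: "\<alpha> \<ge> 1"
  shows "\<alpha> \<in> HG G"
  unfolding HG_def
proof (intro CollectI ballI)
  fix A assume A: "A \<in> PG G {0..}"
  obtain c :: "nat \<Rightarrow> bool" where c: "\<And>i j. adj G i j \<Longrightarrow> c i \<noteq> c j"
    using bg unfolding bipartite_graph_def by blast
  have "psd (nverts G) (\<lambda>i j. A i j powr \<alpha>)"
  proof (rule hg_psd[OF PG_psd[OF A] _ _ al, of c])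
    fix i j assume "i < nverts G" "j < nverts G"
    thus "A i j \<ge> 0" using A unfolding PG_def by auto
  next
    fix i j assume "i < nverts G" "j < nverts G" "i \<noteq> j" "A i j \<noteq> 0"
    thus "c i \<noteq> c j" using c PG_pat[OF A] by blast
  qed
  thus "(\<lambda>i j. A i j powr \<alpha>) \<in> PG G UNIV" by (rule PG_intro[OF _ _ A]) simp
qed

lemma phi_ge2:
  assumes bg: "bipartite_graph G" and al: "\<alpha> \<ge> 2"
  shows "\<alpha> \<in> HG_phi G"
  unfolding HG_phi_def
proof (intro CollectI ballI)
  fix A assume A: "A \<in> PG G UNIV"
  have ps: "psd (nverts G) A" by (rule PG_psd[OF A])
  have "psd (nverts G) (\<lambda>i j. phi_pow \<alpha> (A i j))"
  proof (rule powr_psd[OF ps PG_pat[OF A] notri[OF bg] al])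
    fix i j assume "i < nverts G" "j < nverts G"
    thus "phi_pow \<alpha> (A i j) = phi_pow \<alpha> (A j i)" using ps unfolding psd_def by auto
  next
    fix i j show "\<bar>phi_pow \<alpha> (A i j)\<bar> = \<bar>A i j\<bar> powr \<alpha>" by (simp add: phi_pow_def)
  next
    fix i assume "i < nverts G"
    thus "phi_pow \<alpha> (A i i) = A i i powr \<alpha>" using psd_diag[OF ps] by (simp add: phi_pow_def)
  qed
  thus "(\<lambda>i j. phi_pow \<alpha> (A i j)) \<in> PG G UNIV" by (rule PG_intro[OF _ _ A]) (simp add: phi_pow_def)
qed

lemma psi_ge2:
  assumes bg: "bipartite_graph G" and al: "\<alpha> \<ge> 2"
  shows "\<alpha> \<in> HG_psi G"
  unfolding HG_psi_def
proof (intro CollectI ballI)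
  fix A assume A: "A \<in> PG G UNIV"
  have ps: "psd (nverts G) A" by (rule PG_psd[OF A])
  have "psd (nverts G) (\<lambda>i j. psi_pow \<alpha> (A i j))"
  proof (rule powr_psd[OF ps PG_pat[OF A] notri[OF bg] al])
    fix i j assume "i < nverts G" "j < nverts G"
    thus "psi_pow \<alpha> (A i j) = psi_pow \<alpha> (A j i)" using ps unfolding psd_def by auto
  next
    fix i j show "\<bar>psi_pow \<alpha> (A i j)\<bar> = \<bar>A i j\<bar> powr \<alpha>"
      by (cases "A i j = 0") (simp_all add: psi_pow_def abs_mult abs_sgn_eq)
  next
    fix i assume i: "i < nverts G"
    show "psi_pow \<alpha> (A i i) = A i i powr \<alpha>" using psd_diag[OF ps i]
      by (cases "A i i = 0") (simp_all add: psi_pow_def)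
  qed
  thus "(\<lambda>i j. psi_pow \<alpha> (A i j)) \<in> PG G UNIV" by (rule PG_intro[OF _ _ A]) (simp add: psi_pow_def)
qed

lemma psi_1: "1 \<in> HG_psi G"
proof -
  have "psi_pow 1 x = x" for x by (cases "x = 0") (auto simp: psi_pow_def sgn_if)
  thus ?thesis unfolding HG_psi_def PG_def by simp
qed




lemma low1:
  assumes sg: "simple_graph G" and cg: "connected_graph G" and n3: "nverts G \<ge> 3" and al: "\<alpha> < 1"
  shows "\<alpha> \<notin> HG G \<and> \<alpha> \<notin> HG_phi G \<and> \<alpha> \<notin> HG_psi G"
proof -
  obtain u v w where uw: "u \<noteq> w" and vu: "adj G v u" and vw: "adj G v w" using cherry[OF sg cg n3] by blast
  have sgf: "\<And>i j. adj G i j \<Longrightarrow> i < nverts G \<and> j < nverts G \<and> i \<noteq> j \<and> adj G j i"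
    using sg unfolding simple_graph_def by blast
  obtain A where ps: "psd (nverts G) A" and nn: "\<forall>i j. A i j \<ge> 0"
    and pat: "\<forall>i<nverts G. \<forall>j<nverts G. i \<noteq> j \<and> \<not> adj G i j \<longrightarrow> A i j = 0"
    and np: "\<not> psd (nverts G) (\<lambda>i j. A i j powr \<alpha>)"
    using ce1[of u v w "nverts G" "adj G" \<alpha>] sgf[OF vu] sgf[OF vw] uw vu vw al by metis
  have A: "A \<in> PG G {0..}" using ps nn pat unfolding PG_def by auto
  have AU: "A \<in> PG G UNIV" using ps nn pat unfolding PG_def by auto
  have e1: "(\<lambda>i j. phi_pow \<alpha> (A i j)) = (\<lambda>i j. A i j powr \<alpha>)" using nn by (simp add: phi_pow_def)
  have e2: "(\<lambda>i j. psi_pow \<alpha> (A i j)) = (\<lambda>i j. A i j powr \<alpha>)"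
  proof (intro ext)
    fix i j show "psi_pow \<alpha> (A i j) = A i j powr \<alpha>" using nn[rule_format, of i j]
      by (cases "A i j = 0") (simp_all add: psi_pow_def)
  qed
  show ?thesis
  proof (intro conjI notI)
    assume "\<alpha> \<in> HG G"
    hence "(\<lambda>i j. A i j powr \<alpha>) \<in> PG G UNIV" using A unfolding HG_def by blast
    thus False using np PG_psd by blast
  next
    assume "\<alpha> \<in> HG_phi G"
    hence "(\<lambda>i j. phi_pow \<alpha> (A i j)) \<in> PG G UNIV" using AU unfolding HG_phi_def by blast
    thus False using np PG_psd e1 by metis
  next
    assume "\<alpha> \<in> HG_psi G"
    hence "(\<lambda>i j. psi_pow \<alpha> (A i j)) \<in> PG G UNIV" using AU unfolding HG_psi_def by blast
    thus False using np PG_psd e2 by metis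
  qed
qed

lemma low2:
  assumes sub: "subgraph_of (K_bip 2 2) G" and al: "\<alpha> < 2"
  shows "\<alpha> \<notin> HG_phi G"
proof
  assume H: "\<alpha> \<in> HG_phi G"
  obtain f where inj: "inj_on f {..<4}" and im: "f ` {..<4} \<subseteq> {..<nverts G}"
    and ed: "\<And>i j. adj (K_bip 2 2) i j \<Longrightarrow> adj G (f i) (f j)"
    using sub unfolding subgraph_of_def by (auto simp: K_bip_def nverts_def)
  have K: "adj (K_bip 2 2) i j \<longleftrightarrow> i < 4 \<and> j < 4 \<and> ((i < 2 \<and> 2 \<le> j) \<or> (j < 2 \<and> 2 \<le> i))" for i j
    by (simp add: K_bip_def adj_def)
  have e: "adj G (f 0) (f 2)" "adj G (f 2) (f 0)" "adj G (f 0) (f 3)" "adj G (f 3) (f 0)"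
    "adj G (f 1) (f 2)" "adj G (f 2) (f 1)" "adj G (f 1) (f 3)" "adj G (f 3) (f 1)"
    by (rule ed, simp add: K)+
  have dd: "f i \<noteq> f j" if "i < 4" "j < 4" "i \<noteq> j" for i j
    using inj that unfolding inj_on_def by blast
  have lt: "f i < nverts G" if "i < 4" for i using im that by auto
  obtain A where ps: "psd (nverts G) A"
    and pat: "\<forall>i<nverts G. \<forall>j<nverts G. i \<noteq> j \<and> \<not> adj G i j \<longrightarrow> A i j = 0"
    and np: "\<not> psd (nverts G) (\<lambda>i j. phi_pow \<alpha> (A i j))"
    using ce2[of "f 0" "f 1" "f 2" "f 3" "nverts G" "adj G" \<alpha>, OF dd dd dd dd dd dd lt lt lt lt e al]
    by auto
  have AU: "A \<in> PG G UNIV" using ps pat unfolding PG_def by auto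
  have "(\<lambda>i j. phi_pow \<alpha> (A i j)) \<in> PG G UNIV" using H AU unfolding HG_phi_def by blast
  thus False using np PG_psd by blast
qed

theorem theorem4p10:
  fixes G :: graph
  assumes "simple_graph G" and "connected_graph G" and "bipartite_graph G"
    and "nverts G \<ge> 3"
  shows "HG G = {1..} \<and>
         {2..} \<subseteq> HG_phi G \<and> HG_phi G \<subseteq> {1..} \<and>
         {1} \<union> {3..} \<subseteq> HG_psi G \<and> HG_psi G \<subseteq> {1..} \<and>
         (\<forall>m::nat. m \<ge> 2 \<and> subgraph_of (K_bip 2 2) G \<and> subgraph_of G (K_bip 2 m) \<longrightarrow>
           HG_phi G = {2..} \<and> {1} \<union> {2..} \<subseteq> HG_psi G \<and> HG_psi G \<subseteq> {1..})"
proof -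
  have L: "\<alpha> \<ge> 1" if "\<alpha> \<in> HG G \<or> \<alpha> \<in> HG_phi G \<or> \<alpha> \<in> HG_psi G" for \<alpha>
    using low1[OF assms(1,2,4), of \<alpha>] that by (cases "\<alpha> < 1") auto
  have HG: "HG G = {1..}" using L HG_ge1[OF assms(3)] by auto
  have P2: "{2..} \<subseteq> HG_phi G" using phi_ge2[OF assms(3)] by auto
  have P1: "HG_phi G \<subseteq> {1..}" using L by auto
  have S2: "{1} \<union> {2..} \<subseteq> HG_psi G" using psi_ge2[OF assms(3)] psi_1 by auto
  hence S3: "{1} \<union> {3..} \<subseteq> HG_psi G" by auto
  have S1: "HG_psi G \<subseteq> {1..}" using L by auto
  have K: "HG_phi G = {2..}" if "subgraph_of (K_bip 2 2) G" for m :: nat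
  proof
    show "HG_phi G \<subseteq> {2..}" using low2[OF that] by (auto simp: not_less[symmetric])
  qed (rule P2)
  show ?thesis using HG P2 P1 S3 S1 S2 K by blast
qed


end
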